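(* Let $D$ be a $3$-dicritical digraph not isomorphic to $\overleftrightarrow{K_3}$ or to $\vec{W_3}$, and let $T$ be a tree such that the bidirected tree $\overleftrightarrow{T}$ (obtained from $T$ by replacing each edge by a digon) is a subdigraph of $D$. Then the number of unordered pairs $\{u,v\}$ of distinct vertices of $T$ such that neither $uv$ nor $vu$ is an arc of $D$ is at least $\mathrm{dearth}(T)$.
   Context: Digraphs are finite, without loops or parallel arcs; a digon is a pair of arcs $uv,vu$. A $2$-dicolouring is a map to $\{1,2\}$ whose colour classes induce acyclic subdigraphs. $D$ is $3$-dicritical if $D$ has no $2$-dicolouring but every proper subdigraph has one. $\overleftrightarrow{K_3}$ has 3 vertices and all 6 arcs; $\vec{W_3}$ is a directed triangle $a\to b\to c\to a$ plus a vertex $r$ joined by a digon to each of $a,b,c$. For a tree $T$, $V_3(T)$ is the set of vertices of degree at least 3, an odd pair is a pair of non-adjacent vertices of $T$ at odd distance in $T$, $\mathrm{op}(T)$ is the number of odd pairs, and $\mathrm{dearth}(T)=\sum_{v\in V_3(T)}\frac16 d_T(v)(d_T(v)-1)+\mathrm{op}(T)$. *)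

theory Defs
  imports Complex_Main
begin

text \<open>A digraph is a pair (V, A) of a finite vertex set and an arc relation
  A \<subseteq> V \<times> V without loops; parallel arcs are excluded by the set representation.\<close>

definition digraph :: "'a set \<Rightarrow> ('a \<times> 'a) set \<Rightarrow> bool" where
  "digraph V A \<longleftrightarrow> finite V \<and> A \<subseteq> V \<times> V \<and> (\<forall>v. (v, v) \<notin> A)"

definition subdigraph :: "'a set \<Rightarrow> ('a \<times> 'a) set \<Rightarrow> 'a set \<Rightarrow> ('a \<times> 'a) set \<Rightarrow> bool" where
  "subdigraph V' A' V A \<longleftrightarrow> V' \<subseteq> V \<and> A' \<subseteq> A \<and> A' \<subseteq> V' \<times> V'"

definition proper_subdigraph :: "'a set \<Rightarrow> ('a \<times> 'a) set \<Rightarrow> 'a set \<Rightarrow> ('a \<times> 'a) set \<Rightarrow> bool" where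
  "proper_subdigraph V' A' V A \<longleftrightarrow> subdigraph V' A' V A \<and> (V', A') \<noteq> (V, A)"

definition two_dicolouring :: "'a set \<Rightarrow> ('a \<times> 'a) set \<Rightarrow> ('a \<Rightarrow> nat) \<Rightarrow> bool" where
  "two_dicolouring V A c \<longleftrightarrow> (\<forall>v\<in>V. c v \<in> {1, 2}) \<and>
     (\<forall>i\<in>{1::nat, 2}. acyclic (A \<inter> ({v\<in>V. c v = i} \<times> {v\<in>V. c v = i})))"

definition two_dicolourable :: "'a set \<Rightarrow> ('a \<times> 'a) set \<Rightarrow> bool" where
  "two_dicolourable V A \<longleftrightarrow> (\<exists>c. two_dicolouring V A c)"

definition three_dicritical :: "'a set \<Rightarrow> ('a \<times> 'a) set \<Rightarrow> bool" where
  "three_dicritical V A \<longleftrightarrow> digraph V A \<and> \<not> two_dicolourable V A \<and>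
     (\<forall>V' A'. proper_subdigraph V' A' V A \<longrightarrow> two_dicolourable V' A')"

definition iso_digraph :: "'a set \<Rightarrow> ('a \<times> 'a) set \<Rightarrow> 'b set \<Rightarrow> ('b \<times> 'b) set \<Rightarrow> bool" where
  "iso_digraph V A V' A' \<longleftrightarrow> (\<exists>f. bij_betw f V V' \<and>
     (\<forall>u\<in>V. \<forall>v\<in>V. (u, v) \<in> A \<longleftrightarrow> (f u, f v) \<in> A'))"

definition K3_verts :: "nat set" where "K3_verts = {0, 1, 2}"
definition K3_arcs :: "(nat \<times> nat) set" where
  "K3_arcs = {(i, j). i \<in> K3_verts \<and> j \<in> K3_verts \<and> i \<noteq> j}"

text \<open>W3: directed triangle 0 \<rightarrow> 1 \<rightarrow> 2 \<rightarrow> 0 plus vertex 3 joined by a digon to each of 0,1,2.\<close>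
definition W3_verts :: "nat set" where "W3_verts = {0, 1, 2, 3}"
definition W3_arcs :: "(nat \<times> nat) set" where
  "W3_arcs = {(0, 1), (1, 2), (2, 0), (3, 0), (0, 3), (3, 1), (1, 3), (3, 2), (2, 3)}"

definition ugraph :: "'a set \<Rightarrow> ('a \<times> 'a) set \<Rightarrow> bool" where
  "ugraph VT E \<longleftrightarrow> finite VT \<and> E \<subseteq> VT \<times> VT \<and> sym E \<and> (\<forall>v. (v, v) \<notin> E)"

definition connected_ug :: "'a set \<Rightarrow> ('a \<times> 'a) set \<Rightarrow> bool" where
  "connected_ug VT E \<longleftrightarrow> (\<forall>u\<in>VT. \<forall>v\<in>VT. (u, v) \<in> E\<^sup>*)"

definition has_cycle :: "('a \<times> 'a) set \<Rightarrow> bool" where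
  "has_cycle E \<longleftrightarrow> (\<exists>xs. length xs \<ge> 3 \<and> distinct xs \<and>
     (\<forall>i. Suc i < length xs \<longrightarrow> (xs ! i, xs ! Suc i) \<in> E) \<and> (last xs, hd xs) \<in> E)"

definition tree :: "'a set \<Rightarrow> ('a \<times> 'a) set \<Rightarrow> bool" where
  "tree VT E \<longleftrightarrow> ugraph VT E \<and> VT \<noteq> {} \<and> connected_ug VT E \<and> \<not> has_cycle E"

definition deg :: "('a \<times> 'a) set \<Rightarrow> 'a \<Rightarrow> nat" where
  "deg E v = card {u. (v, u) \<in> E}"

definition V3 :: "'a set \<Rightarrow> ('a \<times> 'a) set \<Rightarrow> 'a set" where
  "V3 VT E = {v \<in> VT. deg E v \<ge> 3}"

definition gdist :: "('a \<times> 'a) set \<Rightarrow> 'a \<Rightarrow> 'a \<Rightarrow> nat" where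
  "gdist E u v = (LEAST n. (u, v) \<in> E ^^ n)"

definition odd_pairs :: "'a set \<Rightarrow> ('a \<times> 'a) set \<Rightarrow> 'a set set" where
  "odd_pairs VT E = {{u, v} | u v. u \<in> VT \<and> v \<in> VT \<and> u \<noteq> v \<and> (u, v) \<notin> E \<and> odd (gdist E u v)}"

definition op_count :: "'a set \<Rightarrow> ('a \<times> 'a) set \<Rightarrow> nat" where
  "op_count VT E = card (odd_pairs VT E)"

definition dearth :: "'a set \<Rightarrow> ('a \<times> 'a) set \<Rightarrow> real" where
  "dearth VT E = (\<Sum>v\<in>V3 VT E. real (deg E v) * (real (deg E v) - 1) / 6) + real (op_count VT E)"

definition missing_pairs :: "('a \<times> 'a) set \<Rightarrow> 'a set \<Rightarrow> 'a set set" where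
  "missing_pairs A VT = {{u, v} | u v. u \<in> VT \<and> v \<in> VT \<and> u \<noteq> v \<and> (u, v) \<notin> A \<and> (v, u) \<notin> A}"

end

theory Submission
  imports Defs
begin


definition mp :: "('a \<Rightarrow> 'a \<Rightarrow> bool) \<Rightarrow> 'a set \<Rightarrow> 'a set set" where
  "mp P S = {{x,y}|x y. x\<in>S \<and> y\<in>S \<and> x\<noteq>y \<and> \<not> P x y}"

lemma mp_finite: "finite S \<Longrightarrow> finite (mp P S)"
proof -
  assume "finite S"
  have "mp P S \<subseteq> Pow S" unfolding mp_def by auto
  then show ?thesis using \<open>finite S\<close> finite_subset by blast
qed

lemma mantel_aux:
  assumes "finite N" "\<forall>x y. P x y \<longrightarrow> P y x"
    "\<forall>x\<in>N. \<forall>y\<in>N. \<forall>z\<in>N. x\<noteq>y \<and> y\<noteq>z \<and> x\<noteq>z \<longrightarrow> \<not>(P x y \<and> P y z \<and> P x z)"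
  shows "6 * card (mp P N) + 2 \<ge> card N * (card N - 1) \<and>
         (card N \<noteq> 2 \<longrightarrow> 6 * card (mp P N) \<ge> card N * (card N - 1))"
  using assms
proof (induction "card N" arbitrary: N rule: less_induct)
  case less
  show ?case
  proof (cases "card N \<le> 1")
    case True
    then have z: "card N * (card N - 1) = 0" by (cases "card N") auto
    show ?thesis unfolding z by simp
  next
    case False
    then have "\<exists>a b. a \<in> N \<and> b \<in> N \<and> a \<noteq> b"
      by (metis One_nat_def card_le_Suc0_iff_eq less.prems(1))
    have "\<exists>x y. x \<in> N \<and> y \<in> N \<and> x \<noteq> y \<and> (\<forall>w\<in>N-{x,y}. \<not> P w x \<or> \<not> P w y)"
    proof (cases "\<exists>x\<in>N. \<exists>y\<in>N. x \<noteq> y \<and> P x y")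
      case True
      then obtain x y where "x\<in>N" "y\<in>N" "x\<noteq>y" "P x y" by blast
      then show ?thesis using less.prems(2,3) by blast
    next
      case False
      then show ?thesis using \<open>\<exists>a b. a \<in> N \<and> b \<in> N \<and> a \<noteq> b\<close> by blast
    qed
    then obtain x y where xy: "x \<in> N" "y \<in> N" "x \<noteq> y" and Q: "\<forall>w\<in>N-{x,y}. \<not> P w x \<or> \<not> P w y"
      by blast
    define N' where "N' = N - {x,y}"
    have cN': "card N' = card N - 2" unfolding N'_def using xy less.prems(1)
      by (simp add: card_Diff_subset)
    have fN': "finite N'" using less.prems(1) N'_def by simp
    have IH: "6 * card (mp P N') + 2 \<ge> card N' * (card N' - 1) \<and>
         (card N' \<noteq> 2 \<longrightarrow> 6 * card (mp P N') \<ge> card N' * (card N' - 1))"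
    proof (rule less.hyps[OF _ fN' less.prems(2)])
      show "card N' < card N" using cN' False by simp
      show "\<forall>x\<in>N'. \<forall>y\<in>N'. \<forall>z\<in>N'. x\<noteq>y \<and> y\<noteq>z \<and> x\<noteq>z \<longrightarrow> \<not>(P x y \<and> P y z \<and> P x z)"
        using less.prems(3) unfolding N'_def by blast
    qed
    define g where "g w = (if \<not> P w x then {w,x} else {w,y})" for w
    have ginj: "inj_on g N'"
      unfolding inj_on_def g_def N'_def using xy by (auto simp: doubleton_eq_iff)
    have gsub: "g ` N' \<subseteq> mp P N"
      unfolding g_def mp_def N'_def using xy Q less.prems(2) by auto
    have msub: "mp P N' \<subseteq> mp P N" unfolding mp_def N'_def by blast
    have disj: "mp P N' \<inter> g ` N' = {}"
      unfolding mp_def g_def N'_def by (auto simp: doubleton_eq_iff)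
    have "card (mp P N' \<union> g ` N') = card (mp P N') + card N'"
      using card_Un_disjoint[OF mp_finite[OF fN'] finite_imageI[OF fN'] disj]
        card_image[OF ginj] by simp
    moreover have "card (mp P N' \<union> g ` N') \<le> card (mp P N)"
      by (rule card_mono[OF mp_finite[OF less.prems(1)]]) (use gsub msub in blast)
    ultimately have ge: "card (mp P N) \<ge> card (mp P N') + card N'" by simp
    define d where "d = card N - 2"
    have d: "card N = d + 2" using False d_def by simp
    then have cd: "card N' = d" using cN' by simp
    show ?thesis
    proof (cases "d = 2")
      case True
      then show ?thesis using ge IH d cd by simp
    next
      case False
      have h: "6 * card (mp P N') \<ge> d * (d - 1)" using IH False cd by simp
      have "card N * (card N - 1) = d * d + 3 * d + 2" using d by (simp add: algebra_simps)
      moreover have "d * (d - 1) + 6 * d \<ge> d * d + 3 * d + 2 \<or> d = 0"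
        by (cases d) (auto simp: algebra_simps)
      ultimately show ?thesis using ge h d cd by auto
    qed
  qed
qed



lemma digon_not_acyclic: "(p,q)\<in>R \<Longrightarrow> (q,p)\<in>R \<Longrightarrow> \<not> acyclic R"
  unfolding acyclic_def by (meson r_into_trancl' trancl_into_trancl)

lemma tri_not_acyclic: "(p,q)\<in>R \<Longrightarrow> (q,r)\<in>R \<Longrightarrow> (r,p)\<in>R \<Longrightarrow> \<not> acyclic R"
  unfolding acyclic_def by (meson r_into_trancl' trancl_into_trancl)

lemma col_acyc:
  assumes "two_dicolouring V A c" "p \<in> V"
  shows "acyclic (A \<inter> ({v\<in>V. c v = c p} \<times> {v\<in>V. c v = c p}))"
proof -
  have cp: "c p \<in> {1,2}" using assms unfolding two_dicolouring_def by blast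
  have "\<forall>i\<in>{1::nat,2}. acyclic (A \<inter> ({v\<in>V. c v = i} \<times> {v\<in>V. c v = i}))"
    using assms(1) unfolding two_dicolouring_def by (rule conjunct2)
  then show ?thesis using cp by (rule bspec)
qed

lemma col_digon:
  assumes "two_dicolouring V A c" "p \<in> V" "q \<in> V" "(p,q)\<in>A" "(q,p)\<in>A"
  shows "c p \<noteq> c q"
proof
  assume eq: "c p = c q"
  have m1: "(p,q) \<in> A \<inter> ({v\<in>V. c v = c p} \<times> {v\<in>V. c v = c p})" using assms(2-4) eq by simp
  have m2: "(q,p) \<in> A \<inter> ({v\<in>V. c v = c p} \<times> {v\<in>V. c v = c p})" using assms(2,3,5) eq by simp
  show False using digon_not_acyclic[OF m1 m2] col_acyc[OF assms(1,2)] by contradiction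
qed

lemma col_tri:
  assumes "two_dicolouring V A c" "p \<in> V" "q \<in> V" "r \<in> V" "(p,q)\<in>A" "(q,r)\<in>A" "(r,p)\<in>A"
    "c q = c p" "c r = c p"
  shows False
proof -
  have m1: "(p,q) \<in> A \<inter> ({v\<in>V. c v = c p} \<times> {v\<in>V. c v = c p})" using assms by simp
  have m2: "(q,r) \<in> A \<inter> ({v\<in>V. c v = c p} \<times> {v\<in>V. c v = c p})" using assms by simp
  have m3: "(r,p) \<in> A \<inter> ({v\<in>V. c v = c p} \<times> {v\<in>V. c v = c p})" using assms by simp
  show False using tri_not_acyclic[OF m1 m2 m3] col_acyc[OF assms(1,2)] by contradiction
qed

lemma crit_sub:
  assumes "three_dicritical V A" "V' \<subseteq> V" "A' \<subseteq> A" "A' \<subseteq> V' \<times> V'" "\<not> two_dicolourable V' A'"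
  shows "V' = V \<and> A' = A"
  using assms unfolding three_dicritical_def proper_subdigraph_def subdigraph_def by blast

lemma no_K3:
  assumes crit: "three_dicritical V A" and niso: "\<not> iso_digraph V A K3_verts K3_arcs"
    and d: "v \<noteq> x" "v \<noteq> y" "x \<noteq> y"
    and arcs: "(v,x)\<in>A" "(x,v)\<in>A" "(v,y)\<in>A" "(y,v)\<in>A" "(x,y)\<in>A" "(y,x)\<in>A"
  shows False
proof -
  define V' where "V' = {v,x,y}"
  define A' where "A' = {(v,x),(x,v),(v,y),(y,v),(x,y),(y,x)}"
  have AV: "A \<subseteq> V \<times> V" using crit unfolding three_dicritical_def digraph_def by blast
  have "\<not> two_dicolourable V' A'"
  proof
    assume "two_dicolourable V' A'"
    then obtain c where c: "two_dicolouring V' A' c" unfolding two_dicolourable_def by blast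
    have "c v \<noteq> c x" "c v \<noteq> c y" "c x \<noteq> c y"
      by (rule col_digon[OF c]; simp add: V'_def A'_def)+
    moreover have "c v \<in> {1,2}" "c x \<in> {1,2}" "c y \<in> {1,2}"
      using c unfolding two_dicolouring_def V'_def by auto
    ultimately show False by auto
  qed
  moreover have "V' \<subseteq> V" using AV arcs unfolding V'_def by blast
  moreover have "A' \<subseteq> A" using arcs unfolding A'_def by blast
  moreover have "A' \<subseteq> V' \<times> V'" unfolding A'_def V'_def by blast
  ultimately have eq: "V' = V \<and> A' = A" using crit_sub[OF crit] by blast
  define f :: "'a \<Rightarrow> nat" where "f u = (if u = v then 0 else if u = x then 1 else 2)" for u
  have "bij_betw f V' K3_verts"
    unfolding bij_betw_def inj_on_def V'_def K3_verts_def f_def using d by auto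
  moreover have "\<forall>u\<in>V'. \<forall>w\<in>V'. (u, w) \<in> A' \<longleftrightarrow> (f u, f w) \<in> K3_arcs"
    unfolding V'_def A'_def K3_arcs_def K3_verts_def f_def using d by auto
  ultimately have "iso_digraph V' A' K3_verts K3_arcs" unfolding iso_digraph_def by blast
  then show False using eq niso by simp
qed

lemma no_W3:
  assumes crit: "three_dicritical V A" and niso: "\<not> iso_digraph V A W3_verts W3_arcs"
    and d: "v \<noteq> x" "v \<noteq> y" "v \<noteq> z" "x \<noteq> y" "x \<noteq> z" "y \<noteq> z"
    and arcs: "(v,x)\<in>A" "(x,v)\<in>A" "(v,y)\<in>A" "(y,v)\<in>A" "(v,z)\<in>A" "(z,v)\<in>A"
       "(x,y)\<in>A" "(y,z)\<in>A" "(z,x)\<in>A"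
  shows False
proof -
  define V' where "V' = {v,x,y,z}"
  define A' where "A' = {(v,x),(x,v),(v,y),(y,v),(v,z),(z,v),(x,y),(y,z),(z,x)}"
  have AV: "A \<subseteq> V \<times> V" using crit unfolding three_dicritical_def digraph_def by blast
  have "\<not> two_dicolourable V' A'"
  proof
    assume "two_dicolourable V' A'"
    then obtain c where c: "two_dicolouring V' A' c" unfolding two_dicolourable_def by blast
    have "c v \<noteq> c x" "c v \<noteq> c y" "c v \<noteq> c z"
      by (rule col_digon[OF c]; simp add: V'_def A'_def)+
    moreover have "c v \<in> {1,2}" "c x \<in> {1,2}" "c y \<in> {1,2}" "c z \<in> {1,2}"
      using c unfolding two_dicolouring_def V'_def by auto
    ultimately have "c y = c x" "c z = c x" by auto
    then show False using col_tri[OF c, of x y z] by (simp add: V'_def A'_def)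
  qed
  moreover have "V' \<subseteq> V" using AV arcs unfolding V'_def by blast
  moreover have "A' \<subseteq> A" using arcs unfolding A'_def by blast
  moreover have "A' \<subseteq> V' \<times> V'" unfolding A'_def V'_def by blast
  ultimately have eq: "V' = V \<and> A' = A" using crit_sub[OF crit] by blast
  define f :: "'a \<Rightarrow> nat" where "f u = (if u = x then 0 else if u = y then 1 else if u = z then 2 else 3)" for u
  have "bij_betw f V' W3_verts"
    unfolding bij_betw_def inj_on_def V'_def W3_verts_def f_def using d by auto
  moreover have "\<forall>u\<in>V'. \<forall>w\<in>V'. (u, w) \<in> A' \<longleftrightarrow> (f u, f w) \<in> W3_arcs"
  proof -
    have fv: "f v = 3" "f x = 0" "f y = 1" "f z = 2" unfolding f_def using d by auto
    have d2: "x \<noteq> v" "y \<noteq> v" "z \<noteq> v" "y \<noteq> x" "z \<noteq> x" "z \<noteq> y" using d by auto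
    show ?thesis unfolding V'_def A'_def W3_arcs_def using d d2 by (simp add: fv)
  qed
  ultimately have "iso_digraph V' A' W3_verts W3_arcs" unfolding iso_digraph_def by blast
  then show False using eq niso by simp
qed

lemma crit_arc:
  assumes crit: "three_dicritical V A" and ab: "(a,b) \<in> A"
  shows "\<exists>c. two_dicolouring V (A - {(a,b)}) c \<and> c a = c b \<and>
     (b,a) \<in> ((A - {(a,b)}) \<inter> ({v\<in>V. c v = c a} \<times> {v\<in>V. c v = c a}))\<^sup>*"
proof -
  have AV: "A \<subseteq> V \<times> V" using crit unfolding three_dicritical_def digraph_def by blast
  then have abV: "a \<in> V" "b \<in> V" using ab by auto
  have "proper_subdigraph V (A - {(a,b)}) V A"
    unfolding proper_subdigraph_def subdigraph_def using AV ab by auto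
  then obtain c where c: "two_dicolouring V (A - {(a,b)}) c"
    using crit unfolding three_dicritical_def two_dicolourable_def by blast
  have nc: "\<not> two_dicolouring V A c" using crit unfolding three_dicritical_def two_dicolourable_def by blast
  have cvals: "\<forall>v\<in>V. c v \<in> {1,2}" using c unfolding two_dicolouring_def by blast
  then obtain j where j: "j \<in> {1::nat,2}" and nac: "\<not> acyclic (A \<inter> ({v\<in>V. c v = j} \<times> {v\<in>V. c v = j}))"
    using nc unfolding two_dicolouring_def by blast
  have acj: "acyclic ((A - {(a,b)}) \<inter> ({v\<in>V. c v = j} \<times> {v\<in>V. c v = j}))"
    using c j unfolding two_dicolouring_def by blast
  have jab: "c a = j \<and> c b = j"
  proof (rule ccontr)
    assume "\<not> (c a = j \<and> c b = j)"
    then have "A \<inter> ({v\<in>V. c v = j} \<times> {v\<in>V. c v = j}) = (A - {(a,b)}) \<inter> ({v\<in>V. c v = j} \<times> {v\<in>V. c v = j})"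
      by auto
    then show False using nac acj by simp
  qed
  then have "A \<inter> ({v\<in>V. c v = j} \<times> {v\<in>V. c v = j}) = insert (a,b) ((A - {(a,b)}) \<inter> ({v\<in>V. c v = j} \<times> {v\<in>V. c v = j}))"
    using ab abV by auto
  then have "(b,a) \<in> ((A - {(a,b)}) \<inter> ({v\<in>V. c v = j} \<times> {v\<in>V. c v = j}))\<^sup>*"
    using nac acj by simp
  then show ?thesis using c jab by auto
qed

theorem lemma30:
  fixes V :: "'a set" and A :: "('a \<times> 'a) set" and VT :: "'a set" and E :: "('a \<times> 'a) set"
  assumes "three_dicritical V A"
    and "\<not> iso_digraph V A K3_verts K3_arcs"
    and "\<not> iso_digraph V A W3_verts W3_arcs"
    and "tree VT E"
    and "subdigraph VT E V A"
  shows "real (card (missing_pairs A VT)) \<ge> dearth VT E"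
proof -
  note crit = assms(1)
  have AV: "A \<subseteq> V \<times> V" using crit unfolding three_dicritical_def digraph_def by blast
  have finVT: "finite VT" and EVT: "E \<subseteq> VT \<times> VT" and symE: "sym E" and irrE: "\<And>v. (v,v) \<notin> E"
    using assms(4) unfolding tree_def ugraph_def by auto
  have conn: "\<And>u w. u \<in> VT \<Longrightarrow> w \<in> VT \<Longrightarrow> (u,w) \<in> E\<^sup>*"
    using assms(4) unfolding tree_def connected_ug_def by blast
  have nocyc: "\<not> has_cycle E" using assms(4) unfolding tree_def by blast
  have VTV: "VT \<subseteq> V" and EA: "E \<subseteq> A" using assms(5) unfolding subdigraph_def by auto
  have Esym: "\<And>p q. (p,q) \<in> E \<Longrightarrow> (q,p) \<in> E" using symE unfolding sym_def by blast
  define N where "N v = {u. (v,u) \<in> E}" for v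
  define P where "P x y = ((x,y) \<in> A \<or> (y,x) \<in> A)" for x y
  define MP where "MP v = mp P (N v)" for v
  have NVT: "N v \<subseteq> VT" for v unfolding N_def using EVT by blast
  have degN: "deg E v = card (N v)" for v unfolding deg_def N_def by simp
  have finN: "finite (N v)" for v using finite_subset[OF NVT finVT] .
  have nb: "(v,x) \<in> A" "(x,v) \<in> A" "v \<noteq> x" if "x \<in> N v" for v x
    using that EA Esym irrE unfolding N_def by blast+
  have K: "\<not> ((p,q) \<in> A \<and> (q,p) \<in> A)" if "p \<in> N v" "q \<in> N v" "p \<noteq> q" for v p q
    using no_K3[OF crit assms(2), of v p q] nb[OF that(1)] nb[OF that(2)] that(3) by blast
  have Cy: "\<not> ((p,q) \<in> A \<and> (q,r) \<in> A \<and> (r,p) \<in> A)"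
    if "p \<in> N v" "q \<in> N v" "r \<in> N v" "p \<noteq> q" "q \<noteq> r" "p \<noteq> r" for v p q r
    using no_W3[OF crit assms(3), of v p q r] nb[OF that(1)] nb[OF that(2)] nb[OF that(3)] that(4-6)
    by blast
  have Tr: "\<not> ((p,q) \<in> A \<and> (q,r) \<in> A \<and> (p,r) \<in> A)"
    if "p \<in> N v" "q \<in> N v" "r \<in> N v" "p \<noteq> q" "q \<noteq> r" "p \<noteq> r" for v p q r
  proof
    assume arcs: "(p,q) \<in> A \<and> (q,r) \<in> A \<and> (p,r) \<in> A"
    then obtain c where c: "two_dicolouring V (A - {(p,r)}) c" and cpr: "c p = c r"
      and path: "(r,p) \<in> ((A - {(p,r)}) \<inter> ({v\<in>V. c v = c p} \<times> {v\<in>V. c v = c p}))\<^sup>*"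
      using crit_arc[OF crit, of p r] by blast
    have inV: "v \<in> V" "p \<in> V" "q \<in> V" "r \<in> V"
      using nb(1)[OF that(1)] AV arcs by auto
    have vp: "v \<noteq> p" "v \<noteq> q" "v \<noteq> r" using nb(3) that(1-3) by auto
    have "c v \<noteq> c p" by (rule col_digon[OF c inV(1,2)]) (use nb[OF that(1)] vp in auto)
    moreover have "c v \<noteq> c q" by (rule col_digon[OF c inV(1,3)]) (use nb[OF that(2)] vp in auto)
    moreover have "c v \<in> {1,2}" "c p \<in> {1,2}" "c q \<in> {1,2}"
      using c inV unfolding two_dicolouring_def by auto
    ultimately have cq: "c q = c p" by auto
    define R where "R = (A - {(p,r)}) \<inter> ({v\<in>V. c v = c p} \<times> {v\<in>V. c v = c p})"
    have ac: "acyclic R" using col_acyc[OF c inV(2)] unfolding R_def .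
    have "(p,q) \<in> R" "(q,r) \<in> R" using arcs inV cq cpr that(4-6) unfolding R_def by auto
    then have "(p,r) \<in> R\<^sup>+" by (meson r_into_trancl' trancl_into_trancl)
    moreover have "(r,p) \<in> R\<^sup>*" using path unfolding R_def .
    ultimately have "(p,p) \<in> R\<^sup>+" by (rule trancl_rtrancl_trancl)
    then show False using ac unfolding acyclic_def by blast
  qed
  have tf: "\<forall>x\<in>N v. \<forall>y\<in>N v. \<forall>z\<in>N v. x\<noteq>y \<and> y\<noteq>z \<and> x\<noteq>z \<longrightarrow> \<not>(P x y \<and> P y z \<and> P x z)" for v
  proof (intro ballI impI notI)
    fix x y z assume h: "x \<in> N v" "y \<in> N v" "z \<in> N v" "x\<noteq>y \<and> y\<noteq>z \<and> x\<noteq>z" "P x y \<and> P y z \<and> P x z"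
    have k1: "\<not> ((x,y) \<in> A \<and> (y,x) \<in> A)" "\<not> ((y,z) \<in> A \<and> (z,y) \<in> A)" "\<not> ((x,z) \<in> A \<and> (z,x) \<in> A)"
      using K[of x v y] K[of y v z] K[of x v z] h by auto
    have t: "\<not> ((p,q) \<in> A \<and> (q,r) \<in> A \<and> (p,r) \<in> A)" "\<not> ((p,q) \<in> A \<and> (q,r) \<in> A \<and> (r,p) \<in> A)"
      if "p \<in> {x,y,z}" "q \<in> {x,y,z}" "r \<in> {x,y,z}" "p \<noteq> q" "q \<noteq> r" "p \<noteq> r" for p q r
      using Tr[of p v q r] Cy[of p v q r] that h(1-3) by auto
    show False using h(5) k1 t h(4) unfolding P_def by (metis insertCI)
  qed
  have mant: "real (deg E v) * (real (deg E v) - 1) / 6 \<le> real (card (MP v))" if "v \<in> V3 VT E" for v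
  proof -
    have d3: "deg E v \<ge> 3" using that unfolding V3_def by simp
    have "6 * card (mp P (N v)) \<ge> card (N v) * (card (N v) - 1)"
      using mantel_aux[of "N v" P] finN tf d3 degN unfolding P_def by auto
    then have "real (deg E v * (deg E v - 1)) \<le> 6 * real (card (MP v))"
      unfolding MP_def degN by linarith
    moreover have "real (deg E v * (deg E v - 1)) = real (deg E v) * (real (deg E v) - 1)"
      using d3 by (simp add: of_nat_diff)
    ultimately have "real (deg E v) * (real (deg E v) - 1) \<le> 6 * real (card (MP v))" by linarith
    then show ?thesis by simp
  qed
  have par: "even n" if ab: "(a,b) \<in> A" "a \<in> VT" "b \<in> VT" "(a,b) \<notin> E" "(b,a) \<notin> E"
      and walk: "(a,b) \<in> E ^^ n \<or> (b,a) \<in> E ^^ n" for a b n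
  proof -
    obtain c where c: "two_dicolouring V (A - {(a,b)}) c" and cab: "c a = c b"
      using crit_arc[OF crit ab(1)] by blast
    have cv: "c p \<in> {1,2}" if "p \<in> VT" for p using c that VTV unfolding two_dicolouring_def by auto
    have ce: "c p \<noteq> c q" if "(p,q) \<in> E" for p q
    proof (rule col_digon[OF c])
      show "p \<in> V" "q \<in> V" using that EVT VTV by auto
      show "(p,q) \<in> A - {(a,b)}" "(q,p) \<in> A - {(a,b)}" using that Esym EA ab(4) by auto
    qed
    have ind: "\<forall>p q. (p,q) \<in> E ^^ m \<longrightarrow> p \<in> VT \<longrightarrow> (c p = c q \<longleftrightarrow> even m)" for m
    proof (induction m)
      case 0
      then show ?case by simp
    next
      case (Suc m)
      show ?case
      proof (intro allI impI)
        fix p q assume pq: "(p,q) \<in> E ^^ Suc m" "p \<in> VT"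
        then obtain r where r: "(p,r) \<in> E ^^ m" "(r,q) \<in> E" by (meson relpow_Suc_E)
        have "r \<in> VT" "q \<in> VT" using r(2) EVT by auto
        then have "c r \<in> {1,2}" "c q \<in> {1,2}" "c r \<noteq> c q" using cv ce r(2) by auto
        then have "c q = (if c r = 1 then 2 else 1)" by auto
        moreover have "c p = c r \<longleftrightarrow> even m" using Suc.IH r(1) pq(2) by blast
        moreover have "c p \<in> {1,2}" using cv pq(2) by blast
        ultimately show "c p = c q \<longleftrightarrow> even (Suc m)" using \<open>c r \<in> {1,2}\<close> by auto
      qed
    qed
    show ?thesis using walk ind ab cab by metis
  qed
  have sub_odd: "odd_pairs VT E \<subseteq> missing_pairs A VT"
  proof
    fix S assume "S \<in> odd_pairs VT E"
    then obtain u w where S: "S = {u,w}" "u \<in> VT" "w \<in> VT" "u \<noteq> w" "(u,w) \<notin> E" "odd (gdist E u w)"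
      unfolding odd_pairs_def by blast
    have wu: "(w,u) \<notin> E" using S(5) Esym by blast
    obtain n where "(u,w) \<in> E ^^ n" using conn[OF S(2,3)] rtrancl_power by blast
    then have walk: "(u,w) \<in> E ^^ gdist E u w" unfolding gdist_def by (rule LeastI)
    have "(u,w) \<notin> A" using par[of u w "gdist E u w"] S walk wu by blast
    moreover have "(w,u) \<notin> A" using par[of w u "gdist E u w"] S walk wu by blast
    ultimately show "S \<in> missing_pairs A VT" unfolding missing_pairs_def using S by blast
  qed
  have sub_mp: "MP v \<subseteq> missing_pairs A VT" for v
    unfolding MP_def mp_def missing_pairs_def P_def using NVT by blast
  have g2: "gdist E x y = 2" if "x \<in> N v" "y \<in> N v" "x \<noteq> y" "(x,y) \<notin> E" for v x y
    unfolding gdist_def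
  proof (rule Least_equality)
    have "(x,v) \<in> E" "(v,y) \<in> E" using that Esym unfolding N_def by auto
    then show "(x,y) \<in> E ^^ 2" by (metis relpow_1 relpow_Suc_I numeral_2_eq_2 One_nat_def)
    show "2 \<le> m" if "(x,y) \<in> E ^^ m" for m
    proof (rule ccontr)
      assume "\<not> 2 \<le> m"
      then have "m = 0 \<or> m = 1" by auto
      then show False using that \<open>x \<noteq> y\<close> \<open>(x,y) \<notin> E\<close> by auto
    qed
  qed
  have disj_odd: "MP v \<inter> odd_pairs VT E = {}" for v
  proof (rule ccontr)
    assume "MP v \<inter> odd_pairs VT E \<noteq> {}"
    then obtain x y u w where xy: "x \<in> N v" "y \<in> N v" "x \<noteq> y" "\<not> P x y"
      and uw: "{x,y} = {u,w}" "odd (gdist E u w)"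
      unfolding MP_def mp_def odd_pairs_def by blast
    have nxy: "(x,y) \<notin> E" "(y,x) \<notin> E" using xy(4) EA unfolding P_def by auto
    have "(u = x \<and> w = y) \<or> (u = y \<and> w = x)" using uw(1) by (auto simp: doubleton_eq_iff)
    then show False using g2[OF xy(1,2,3) nxy(1)] g2[OF xy(2,1) _ nxy(2)] xy(3) uw(2) by auto
  qed
  have disj_mp: "MP v \<inter> MP v' = {}" if "v \<noteq> v'" for v v'
  proof (rule ccontr)
    assume "MP v \<inter> MP v' \<noteq> {}"
    then obtain x y x' y' where xy: "x \<in> N v" "y \<in> N v" "x \<noteq> y" "x' \<in> N v'" "y' \<in> N v'"
      "{x,y} = {x',y'}"
      unfolding MP_def mp_def by blast
    then have xy2: "x \<in> N v'" "y \<in> N v'" by (auto simp: doubleton_eq_iff)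
    have e: "(v,x) \<in> E" "(x,v) \<in> E" "(v,y) \<in> E" "(y,v) \<in> E" "(v',x) \<in> E" "(x,v') \<in> E" "(v',y) \<in> E" "(y,v') \<in> E"
      using xy xy2 Esym unfolding N_def by auto
    have ne: "x \<noteq> v" "x \<noteq> v'" "y \<noteq> v" "y \<noteq> v'" using e irrE by metis+
    have "has_cycle E" unfolding has_cycle_def
    proof (intro exI conjI allI impI)
      show "3 \<le> length [x,v,y,v']" by simp
      show "distinct [x,v,y,v']" using ne that xy(3) by auto
      show "(last [x,v,y,v'], hd [x,v,y,v']) \<in> E" using e by simp
      fix i assume "Suc i < length [x,v,y,v']"
      then have "i = 0 \<or> i = 1 \<or> i = 2" by auto
      then show "([x,v,y,v'] ! i, [x,v,y,v'] ! Suc i) \<in> E" using e by auto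
    qed
    then show False using nocyc by blast
  qed
  have finV3: "finite (V3 VT E)" using finVT unfolding V3_def by simp
  have finMP: "finite (MP v)" for v unfolding MP_def using mp_finite[OF finN] .
  have finmiss: "finite (missing_pairs A VT)"
    by (rule finite_subset[of _ "Pow VT"]) (auto simp: missing_pairs_def finVT)
  have finodd: "finite (odd_pairs VT E)" using finite_subset[OF sub_odd finmiss] .
  have cU: "card (\<Union>(MP ` V3 VT E)) = (\<Sum>v\<in>V3 VT E. card (MP v))"
    by (rule card_UN_disjoint[OF finV3]) (use finMP disj_mp in auto)
  have dj: "odd_pairs VT E \<inter> \<Union>(MP ` V3 VT E) = {}" using disj_odd by blast
  have cUn: "card (odd_pairs VT E \<union> \<Union>(MP ` V3 VT E)) = card (odd_pairs VT E) + (\<Sum>v\<in>V3 VT E. card (MP v))"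
    using card_Un_disjoint[OF finodd _ dj] finV3 finMP cU by simp
  have "card (odd_pairs VT E \<union> \<Union>(MP ` V3 VT E)) \<le> card (missing_pairs A VT)"
    by (rule card_mono[OF finmiss]) (use sub_odd sub_mp in blast)
  then have le: "real (card (odd_pairs VT E)) + (\<Sum>v\<in>V3 VT E. real (card (MP v))) \<le> real (card (missing_pairs A VT))"
    using cUn by (metis of_nat_add of_nat_le_iff of_nat_sum)
  have "(\<Sum>v\<in>V3 VT E. real (deg E v) * (real (deg E v) - 1) / 6) \<le> (\<Sum>v\<in>V3 VT E. real (card (MP v)))"
    by (rule sum_mono) (rule mant)
  then show ?thesis using le unfolding dearth_def op_count_def by linarith
qed

end
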